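(* Let $(K_n;n\ge1)$ be non-negative integral kernels on $\mathsf{X}$, $(\nu_n;n\ge1)$ nonzero finite measures, and $(S_n^-,S_n^+;n\ge1)$ positive bounded measurable functions such that \[ S_n^-(x)\nu_n(\cdot)\le K_n(x,\cdot)\le S_n^+(x)\nu_n(\cdot),\qquad\forall x\in\mathsf{X},\ n\ge1. \] Let $\overline{S}_n:=\sup_{x,x'}\frac{S_n^+(x)}{S_n^-(x')}$, $C_S:=\sup_{n\ge1}\overline{S}_n$ and $\rho_n:=1-\left(\inf_x\frac{S_n^-(x)}{S_n^+(x)}\right)^2$. Then \[ \sup_{n\ge1}\sup_{x,x'\in\mathsf{X}}\frac{K_{0,n}(1)(x)}{K_{0,n}(1)(x')}\le C_S, \] and for every probability measure $\eta$, every bounded measurable $\varphi$ and every $n\ge1$, \[ \sup_{x\in\mathsf{X}}\left|\frac{K_{0,n}(\varphi)(x)}{\eta K_{0,n}(1)}-\frac{K_{0,n}(1)(x)}{\eta K_{0,n}(1)}\frac{\eta K_{0,n}(\varphi)}{\eta K_{0,n}(1)}\right|\le 2\|\varphi\|\,C_S\prod_{p=1}^n\rho_p. \]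
   Context: $(\mathsf{X},\mathcal{B})$ is a measurable space. For a measure $\mu$, kernel $K$ and function $\varphi$: $\mu(\varphi)=\int\varphi\,d\mu$, $K(\varphi)(x)=\int K(x,dy)\varphi(y)$, $\mu K(\cdot)=\int\mu(dx)K(x,\cdot)$; $1$ is the constant function one; $\|\varphi\|=\sup_x|\varphi(x)|$. For kernels $K_n$, $K_{0,n}:=K_1K_2\cdots K_n$ (composition). *)

theory Defs
  imports "HOL-Probability.Probability"
begin

definition kapp :: "('a \<Rightarrow> 'a measure) \<Rightarrow> ('a \<Rightarrow> real) \<Rightarrow> 'a \<Rightarrow> real" where
  "kapp k \<phi> x = (\<integral>y. \<phi> y \<partial>(k x))"

text \<open>Composite kernel K_{0,n} = K_1 K_2 ... K_n acting on functions:
  K_{0,0}(phi) = phi,  K_{0,n+1}(phi) = K_{0,n}(K_{n+1}(phi)).\<close>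
primrec kcomp :: "(nat \<Rightarrow> 'a \<Rightarrow> 'a measure) \<Rightarrow> nat \<Rightarrow> ('a \<Rightarrow> real) \<Rightarrow> 'a \<Rightarrow> real" where
  "kcomp K 0 \<phi> = \<phi>"
| "kcomp K (Suc n) \<phi> = kcomp K n (kapp (K (Suc n)) \<phi>)"

definition supnorm :: "'a measure \<Rightarrow> ('a \<Rightarrow> real) \<Rightarrow> real" where
  "supnorm M \<phi> = (SUP x\<in>space M. \<bar>\<phi> x\<bar>)"

end

theory Submission
  imports Defs
begin


definition bm :: "'a measure \<Rightarrow> ('a \<Rightarrow> real) \<Rightarrow> bool" where
  "bm M f \<longleftrightarrow> f \<in> borel_measurable M \<and> (\<exists>B. \<forall>x\<in>space M. \<bar>f x\<bar> \<le> B)"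

lemma meas_eq: "sets A = sets B \<Longrightarrow> f \<in> borel_measurable B \<Longrightarrow> f \<in> borel_measurable A"
  using measurable_cong_sets[of A B borel borel] by simp

lemma mcong: "(\<And>x. x\<in>space M \<Longrightarrow> f x = g x) \<Longrightarrow> g \<in> borel_measurable M \<Longrightarrow> f \<in> borel_measurable M"
  using measurable_cong[of M f g borel] by simp

definition epsf :: "'a measure \<Rightarrow> ('a \<Rightarrow> real) \<Rightarrow> ('a \<Rightarrow> real) \<Rightarrow> real" where
  "epsf M s p = (INF x\<in>space M. s x / p x)"

lemma bm_add: "bm M f \<Longrightarrow> bm M g \<Longrightarrow> bm M (\<lambda>y. f y + g y)"
  unfolding bm_def
proof (elim conjE exE, intro conjI)
  fix B C assume "\<forall>x\<in>space M. \<bar>f x\<bar> \<le> B" "\<forall>x\<in>space M. \<bar>g x\<bar> \<le> C"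
  then show "\<exists>B. \<forall>x\<in>space M. \<bar>f x + g x\<bar> \<le> B"
  proof (intro exI[of _ "B+C"] ballI)
    fix x assume "x \<in> space M"
    then have "\<bar>f x\<bar> \<le> B" "\<bar>g x\<bar> \<le> C" using \<open>\<forall>x\<in>space M. \<bar>f x\<bar> \<le> B\<close> \<open>\<forall>x\<in>space M. \<bar>g x\<bar> \<le> C\<close> by auto
    then show "\<bar>f x + g x\<bar> \<le> B + C" by arith
  qed
qed auto

lemma bm_diff: "bm M f \<Longrightarrow> bm M g \<Longrightarrow> bm M (\<lambda>y. f y - g y)"
  unfolding bm_def
proof (elim conjE exE, intro conjI)
  fix B C assume "\<forall>x\<in>space M. \<bar>f x\<bar> \<le> B" "\<forall>x\<in>space M. \<bar>g x\<bar> \<le> C"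
  then show "\<exists>B. \<forall>x\<in>space M. \<bar>f x - g x\<bar> \<le> B"
  proof (intro exI[of _ "B+C"] ballI)
    fix x assume "x \<in> space M"
    then have "\<bar>f x\<bar> \<le> B" "\<bar>g x\<bar> \<le> C" using \<open>\<forall>x\<in>space M. \<bar>f x\<bar> \<le> B\<close> \<open>\<forall>x\<in>space M. \<bar>g x\<bar> \<le> C\<close> by auto
    then show "\<bar>f x - g x\<bar> \<le> B + C" by arith
  qed
qed auto

lemma bm_mult: "bm M f \<Longrightarrow> bm M g \<Longrightarrow> bm M (\<lambda>y. f y * g y)"
  unfolding bm_def
proof (elim conjE exE, intro conjI)
  fix B C assume a: "\<forall>x\<in>space M. \<bar>f x\<bar> \<le> B" "\<forall>x\<in>space M. \<bar>g x\<bar> \<le> C"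
  show "\<exists>B. \<forall>x\<in>space M. \<bar>f x * g x\<bar> \<le> B"
  proof (intro exI[of _ "B*C"] ballI)
    fix x assume "x \<in> space M"
    then show "\<bar>f x * g x\<bar> \<le> B * C" using a by (auto simp: abs_mult intro!: mult_mono)
  qed
qed auto

lemma bm_const: "bm M (\<lambda>_. c)" by (auto simp: bm_def)

locale setting =
  fixes M :: "'a measure"
    and K :: "nat \<Rightarrow> 'a \<Rightarrow> 'a measure"
    and \<nu> :: "nat \<Rightarrow> 'a measure"
    and Sm Sp :: "nat \<Rightarrow> 'a \<Rightarrow> real"
  assumes K_sets: "\<And>n x. n \<ge> 1 \<Longrightarrow> x \<in> space M \<Longrightarrow> sets (K n x) = sets M"
    and K_meas: "\<And>n A. n \<ge> 1 \<Longrightarrow> A \<in> sets M \<Longrightarrow> (\<lambda>x. emeasure (K n x) A) \<in> borel_measurable M"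
    and nu_fin: "\<And>n. n \<ge> 1 \<Longrightarrow> finite_measure (\<nu> n)"
    and nu_sets: "\<And>n. n \<ge> 1 \<Longrightarrow> sets (\<nu> n) = sets M"
    and nu_nz: "\<And>n. n \<ge> 1 \<Longrightarrow> emeasure (\<nu> n) (space M) \<noteq> 0"
    and Sm_meas: "\<And>n. n \<ge> 1 \<Longrightarrow> Sm n \<in> borel_measurable M"
    and Sp_meas: "\<And>n. n \<ge> 1 \<Longrightarrow> Sp n \<in> borel_measurable M"
    and Sm_pos: "\<And>n x. n \<ge> 1 \<Longrightarrow> x \<in> space M \<Longrightarrow> Sm n x > 0"
    and Sp_pos: "\<And>n x. n \<ge> 1 \<Longrightarrow> x \<in> space M \<Longrightarrow> Sp n x > 0"
    and Sm_bdd: "\<And>n. n \<ge> 1 \<Longrightarrow> \<exists>B. \<forall>x\<in>space M. Sm n x \<le> B"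
    and Sp_bdd: "\<And>n. n \<ge> 1 \<Longrightarrow> \<exists>B. \<forall>x\<in>space M. Sp n x \<le> B"
    and lower: "\<And>n x A. n \<ge> 1 \<Longrightarrow> x \<in> space M \<Longrightarrow> A \<in> sets M \<Longrightarrow>
                  ennreal (Sm n x) * emeasure (\<nu> n) A \<le> emeasure (K n x) A"
    and upper: "\<And>n x A. n \<ge> 1 \<Longrightarrow> x \<in> space M \<Longrightarrow> A \<in> sets M \<Longrightarrow>
                  emeasure (K n x) A \<le> ennreal (Sp n x) * emeasure (\<nu> n) A"

lemma setting_shift:
  assumes "setting M K \<nu> Sm Sp"
  shows "setting M (\<lambda>m. K (Suc m)) (\<lambda>m. \<nu> (Suc m)) (\<lambda>m. Sm (Suc m)) (\<lambda>m. Sp (Suc m))"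
proof -
  interpret setting M K \<nu> Sm Sp by fact
  show ?thesis
    apply (rule setting.intro)
    apply (rule K_sets; simp)
    apply (rule K_meas; simp)
    apply (rule nu_fin; simp)
    apply (rule nu_sets; simp)
    apply (rule nu_nz; simp)
    apply (rule Sm_meas; simp)
    apply (rule Sp_meas; simp)
    apply (rule Sm_pos; simp)
    apply (rule Sp_pos; simp)
    apply (rule Sm_bdd; simp)
    apply (rule Sp_bdd; simp)
    apply (rule lower; simp)
    apply (rule upper; simp)
    done
qed

lemma kcomp_shift:
  "kcomp K (Suc n) \<phi> = kapp (K 1) (kcomp (\<lambda>m. K (Suc m)) n \<phi>)"
  by (induction n arbitrary: \<phi>) auto

context setting
begin

lemma space_K: "n \<ge> 1 \<Longrightarrow> x \<in> space M \<Longrightarrow> space (K n x) = space M"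
  using K_sets sets_eq_imp_space_eq by blast

lemma space_nu: "n \<ge> 1 \<Longrightarrow> space (\<nu> n) = space M"
  using nu_sets sets_eq_imp_space_eq by blast

lemma nu_fin_sp: "n \<ge> 1 \<Longrightarrow> emeasure (\<nu> n) (space M) < \<infinity>"
  using finite_measure.emeasure_finite[OF nu_fin, of n "space M"] by (simp add: less_top)

lemma K_fin: "n \<ge> 1 \<Longrightarrow> x \<in> space M \<Longrightarrow> finite_measure (K n x)"
proof (rule finite_measureI)
  assume "n \<ge> 1" "x \<in> space M"
  have "emeasure (K n x) (space M) \<le> ennreal (Sp n x) * emeasure (\<nu> n) (space M)"
    using upper[OF \<open>n\<ge>1\<close> \<open>x\<in>space M\<close>] by simp
  also have "\<dots> < \<infinity>" using nu_fin_sp[OF \<open>n\<ge>1\<close>] by (simp add: ennreal_mult_less_top)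
  finally show "emeasure (K n x) (space (K n x)) \<noteq> \<infinity>"
    using space_K[OF \<open>n\<ge>1\<close> \<open>x\<in>space M\<close>] by simp
qed

lemma nn_bounds:
  assumes n: "n \<ge> 1" and x: "x \<in> space M" and f: "f \<in> borel_measurable M"
  shows "ennreal (Sm n x) * (\<integral>\<^sup>+y. f y \<partial>\<nu> n) \<le> (\<integral>\<^sup>+y. f y \<partial>K n x)"
    and "(\<integral>\<^sup>+y. f y \<partial>K n x) \<le> ennreal (Sp n x) * (\<integral>\<^sup>+y. f y \<partial>\<nu> n)"
proof -
  have fn: "f \<in> borel_measurable (\<nu> n)" using f nu_sets[OF n] by (rule meas_eq[rotated])
  have "density (\<nu> n) (\<lambda>_. ennreal (Sm n x)) \<le> K n x"
    by (subst le_measure) (auto simp: nu_sets[OF n] K_sets[OF n x] emeasure_density_const intro!: lower[OF n x])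
  then have "(\<integral>\<^sup>+y. f y \<partial>density (\<nu> n) (\<lambda>_. ennreal (Sm n x))) \<le> (\<integral>\<^sup>+y. f y \<partial>K n x)"
    by (intro nn_integral_mono_measure) (auto simp: nu_sets[OF n] K_sets[OF n x])
  then show "ennreal (Sm n x) * (\<integral>\<^sup>+y. f y \<partial>\<nu> n) \<le> (\<integral>\<^sup>+y. f y \<partial>K n x)"
    by (simp add: nn_integral_density fn nn_integral_cmult)
  have "K n x \<le> density (\<nu> n) (\<lambda>_. ennreal (Sp n x))"
    by (subst le_measure) (auto simp: nu_sets[OF n] K_sets[OF n x] emeasure_density_const intro!: upper[OF n x])
  then have "(\<integral>\<^sup>+y. f y \<partial>K n x) \<le> (\<integral>\<^sup>+y. f y \<partial>density (\<nu> n) (\<lambda>_. ennreal (Sp n x)))"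
    by (intro nn_integral_mono_measure) (auto simp: nu_sets[OF n] K_sets[OF n x])
  then show "(\<integral>\<^sup>+y. f y \<partial>K n x) \<le> ennreal (Sp n x) * (\<integral>\<^sup>+y. f y \<partial>\<nu> n)"
    by (simp add: nn_integral_density fn nn_integral_cmult)
qed

lemma nn_meas:
  assumes n: "n \<ge> 1" and f: "f \<in> borel_measurable M"
  shows "(\<lambda>x. \<integral>\<^sup>+y. f y \<partial>K n x) \<in> borel_measurable M"
  using f
proof (induction rule: borel_measurable_induct)
  case (cong f g)
  have e: "(\<integral>\<^sup>+y. f y \<partial>K n x) = (\<integral>\<^sup>+y. g y \<partial>K n x)" if x: "x \<in> space M" for x
    by (rule nn_integral_cong) (simp add: space_K[OF n x] cong.hyps(3))
  show ?case by (rule mcong[OF e cong.IH])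
next
  case (set A)
  have e: "(\<integral>\<^sup>+y. indicator A y \<partial>K n x) = emeasure (K n x) A" if x: "x \<in> space M" for x
    by (rule nn_integral_indicator) (simp add: K_sets[OF n x] set)
  show ?case by (rule mcong[OF e K_meas[OF n set]])
next
  case (mult u c)
  have e: "(\<integral>\<^sup>+y. c * u y \<partial>K n x) = c * (\<integral>\<^sup>+y. u y \<partial>K n x)" if x: "x \<in> space M" for x
    by (rule nn_integral_cmult) (rule meas_eq[OF K_sets[OF n x] mult.hyps(2)])
  have m: "(\<lambda>x. c * (\<integral>\<^sup>+y. u y \<partial>K n x)) \<in> borel_measurable M"
    using mult.IH by measurable
  show ?case by (rule mcong[OF e m])
next
  case (add u v)
  have e: "(\<integral>\<^sup>+y. v y + u y \<partial>K n x) = (\<integral>\<^sup>+y. v y \<partial>K n x) + (\<integral>\<^sup>+y. u y \<partial>K n x)"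
    if x: "x \<in> space M" for x
    by (rule nn_integral_add) (rule meas_eq[OF K_sets[OF n x]], fact)+
  have m: "(\<lambda>x. (\<integral>\<^sup>+y. v y \<partial>K n x) + (\<integral>\<^sup>+y. u y \<partial>K n x)) \<in> borel_measurable M"
    by (rule borel_measurable_add[OF add.IH(2) add.IH(1)])
  show ?case by (rule mcong[OF e m])
next
  case (seq U)
  have e: "(\<integral>\<^sup>+y. (\<Squnion> range U) y \<partial>K n x) = (SUP i. \<integral>\<^sup>+y. U i y \<partial>K n x)" if x: "x \<in> space M" for x
    unfolding SUP_apply
    by (rule nn_integral_monotone_convergence_SUP[OF seq.hyps(3)]) (rule meas_eq[OF K_sets[OF n x] seq.hyps(1)])
  have m: "(\<lambda>x. SUP i. \<integral>\<^sup>+y. U i y \<partial>K n x) \<in> borel_measurable M"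
    by (rule borel_measurable_SUP) (auto intro: seq.IH)
  show ?case by (rule mcong[OF e m])
qed

lemma bm_meas: "bm M f \<Longrightarrow> f \<in> borel_measurable M" by (simp add: bm_def)

lemma bm_bound: assumes "bm M f" obtains B where "B \<ge> 0" "\<And>x. x \<in> space M \<Longrightarrow> \<bar>f x\<bar> \<le> B"
proof -
  obtain B where "\<forall>x\<in>space M. \<bar>f x\<bar> \<le> B" using assms by (auto simp: bm_def)
  then show ?thesis using that[of "max B 0"] by force
qed

lemma integrable_fin:
  assumes "finite_measure N" "sets N = sets M" "bm M f"
  shows "integrable N f"
proof -
  obtain B where B: "\<And>x. x \<in> space M \<Longrightarrow> \<bar>f x\<bar> \<le> B" using bm_bound[OF assms(3)] by blast
  have sp: "space N = space M" using assms(2) sets_eq_imp_space_eq by blast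
  show ?thesis
  proof (intro finite_measure.integrable_const_bound[OF assms(1), of _ B])
    show "AE x in N. norm (f x) \<le> B" by (rule AE_I2) (use B sp in auto)
    show "f \<in> borel_measurable N" by (rule meas_eq[OF assms(2) bm_meas[OF assms(3)]])
  qed
qed

lemma integral_pos:
  assumes "finite_measure N" "sets N = sets M" "bm M h" "\<And>x. x \<in> space M \<Longrightarrow> h x > 0"
    "emeasure N (space M) \<noteq> 0"
  shows "(\<integral>y. h y \<partial>N) > 0"
proof -
  have sp: "space N = space M" using assms(2) sets_eq_imp_space_eq by blast
  have int: "integrable N h" by (rule integrable_fin) fact+
  have ae: "AE y in N. 0 \<le> h y" by (rule AE_I2) (use assms(4) sp in \<open>auto intro: less_imp_le\<close>)
  have ge: "(\<integral>y. h y \<partial>N) \<ge> 0" by (rule integral_nonneg_AE[OF ae])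
  have "(\<integral>y. h y \<partial>N) \<noteq> 0"
  proof
    assume "(\<integral>y. h y \<partial>N) = 0"
    then have "AE x in N. h x = 0" using integral_nonneg_eq_0_iff_AE[OF int ae] by simp
    then have "AE x in N. False"
    proof (rule AE_mp)
      show "AE x in N. h x = 0 \<longrightarrow> False"
      proof (rule AE_I2)
        fix x assume "x \<in> space N"
        then have "h x > 0" using assms(4) sp by simp
        then show "h x = 0 \<longrightarrow> False" by simp
      qed
    qed
    then have "ae_filter N = bot" by (simp add: trivial_limit_def)
    then have "emeasure N (space N) = 0" by (simp add: ae_filter_eq_bot_iff)
    then show False using assms(5) sp by simp
  qed
  then show ?thesis using ge by simp
qed

lemma integrable_K: "n \<ge> 1 \<Longrightarrow> x \<in> space M \<Longrightarrow> bm M f \<Longrightarrow> integrable (K n x) f"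
  by (rule integrable_fin[OF K_fin K_sets])

lemma integrable_nu: "n \<ge> 1 \<Longrightarrow> bm M f \<Longrightarrow> integrable (\<nu> n) f"
  by (rule integrable_fin[OF nu_fin nu_sets])

lemma kapp_bounds:
  assumes n: "n \<ge> 1" and x: "x \<in> space M" and f: "bm M f" and nn: "\<And>y. y \<in> space M \<Longrightarrow> f y \<ge> 0"
  shows "Sm n x * (\<integral>y. f y \<partial>\<nu> n) \<le> kapp (K n) f x"
    and "kapp (K n) f x \<le> Sp n x * (\<integral>y. f y \<partial>\<nu> n)"
proof -
  have fm0[measurable]: "f \<in> borel_measurable M" using f by (simp add: bm_def)
  have fm: "(\<lambda>y. ennreal (f y)) \<in> borel_measurable M" by measurable
  have ae1: "AE y in \<nu> n. 0 \<le> f y" by (rule AE_I2) (use nn space_nu[OF n] in auto)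
  have ae2: "AE y in K n x. 0 \<le> f y" by (rule AE_I2) (use nn space_K[OF n x] in auto)
  have e1: "(\<integral>\<^sup>+y. ennreal (f y) \<partial>\<nu> n) = ennreal (\<integral>y. f y \<partial>\<nu> n)"
    by (rule nn_integral_eq_integral[OF integrable_nu[OF n f] ae1])
  have e2: "(\<integral>\<^sup>+y. ennreal (f y) \<partial>K n x) = ennreal (kapp (K n) f x)"
    unfolding kapp_def by (rule nn_integral_eq_integral[OF integrable_K[OF n x f] ae2])
  have i1: "(\<integral>y. f y \<partial>\<nu> n) \<ge> 0" by (rule integral_nonneg_AE[OF ae1])
  have i2: "kapp (K n) f x \<ge> 0" unfolding kapp_def by (rule integral_nonneg_AE[OF ae2])
  have sm: "Sm n x > 0" "Sp n x > 0" using Sm_pos Sp_pos n x by auto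
  have m1: "ennreal (Sm n x) * ennreal (\<integral>y. f y \<partial>\<nu> n) = ennreal (Sm n x * (\<integral>y. f y \<partial>\<nu> n))"
    by (rule ennreal_mult[symmetric]) (use sm i1 in auto)
  have m2: "ennreal (Sp n x) * ennreal (\<integral>y. f y \<partial>\<nu> n) = ennreal (Sp n x * (\<integral>y. f y \<partial>\<nu> n))"
    by (rule ennreal_mult[symmetric]) (use sm i1 in auto)
  have p2: "0 \<le> Sp n x * (\<integral>y. f y \<partial>\<nu> n)" using sm i1 by simp
  show "Sm n x * (\<integral>y. f y \<partial>\<nu> n) \<le> kapp (K n) f x"
    using nn_bounds(1)[OF n x fm] unfolding e1 e2 m1 ennreal_le_iff[OF i2] .
  show "kapp (K n) f x \<le> Sp n x * (\<integral>y. f y \<partial>\<nu> n)"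
    using nn_bounds(2)[OF n x fm] unfolding e1 e2 m2 ennreal_le_iff[OF p2] .
qed

lemma kapp_bm:
  assumes n: "n \<ge> 1" and f: "bm M f"
  shows "bm M (kapp (K n) f)"
proof -
  have fm[measurable]: "f \<in> borel_measurable M" using f by (simp add: bm_def)
  obtain B where B: "B \<ge> 0" "\<And>x. x \<in> space M \<Longrightarrow> \<bar>f x\<bar> \<le> B" using bm_bound[OF f] by blast
  obtain C where C: "\<forall>x\<in>space M. Sp n x \<le> C" using Sp_bdd[OF n] by blast
  have m1: "(\<lambda>x. \<integral>\<^sup>+y. ennreal (f y) \<partial>K n x) \<in> borel_measurable M"
    by (rule nn_meas[OF n]) measurable
  have m2: "(\<lambda>x. \<integral>\<^sup>+y. ennreal (- f y) \<partial>K n x) \<in> borel_measurable M"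
    by (rule nn_meas[OF n]) measurable
  have meas: "kapp (K n) f \<in> borel_measurable M"
    by (rule mcong[of _ _ "\<lambda>x. enn2real (\<integral>\<^sup>+y. ennreal (f y) \<partial>K n x) - enn2real (\<integral>\<^sup>+y. ennreal (- f y) \<partial>K n x)"])
      (use m1 m2 in \<open>auto simp: kapp_def real_lebesgue_integral_def integrable_K[OF n _ f]\<close>)
  have cbm: "bm M (\<lambda>_. B)" by (auto simp: bm_def)
  have "\<And>x. x \<in> space M \<Longrightarrow> \<bar>kapp (K n) f x\<bar> \<le> C * (\<integral>y. B \<partial>\<nu> n)"
  proof -
    fix x assume x: "x \<in> space M"
    have "\<bar>kapp (K n) f x\<bar> \<le> (\<integral>y. \<bar>f y\<bar> \<partial>K n x)" unfolding kapp_def by (rule integral_abs_bound)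
    also have "\<dots> \<le> kapp (K n) (\<lambda>_. B) x" unfolding kapp_def
      by (rule integral_mono) (use integrable_K[OF n x f] integrable_K[OF n x cbm] B space_K[OF n x] in auto)
    also have "\<dots> \<le> Sp n x * (\<integral>y. B \<partial>\<nu> n)" by (rule kapp_bounds(2)[OF n x cbm]) (use B in auto)
    also have "\<dots> \<le> C * (\<integral>y. B \<partial>\<nu> n)"
      by (rule mult_right_mono) (use C x B in auto)
    finally show "\<bar>kapp (K n) f x\<bar> \<le> C * (\<integral>y. B \<partial>\<nu> n)" .
  qed
  then show ?thesis using meas by (auto simp: bm_def)
qed

lemma kapp_cong: "n \<ge> 1 \<Longrightarrow> x \<in> space M \<Longrightarrow> (\<And>y. y \<in> space M \<Longrightarrow> f y = g y) \<Longrightarrow>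
   kapp (K n) f x = kapp (K n) g x"
  unfolding kapp_def by (rule Bochner_Integration.integral_cong) (auto simp: space_K)

lemma kapp_add: "n \<ge> 1 \<Longrightarrow> x \<in> space M \<Longrightarrow> bm M f \<Longrightarrow> bm M g \<Longrightarrow>
   kapp (K n) (\<lambda>y. f y + g y) x = kapp (K n) f x + kapp (K n) g x"
  unfolding kapp_def by (rule Bochner_Integration.integral_add) (auto intro: integrable_K)

lemma kapp_diff: "n \<ge> 1 \<Longrightarrow> x \<in> space M \<Longrightarrow> bm M f \<Longrightarrow> bm M g \<Longrightarrow>
   kapp (K n) (\<lambda>y. f y - g y) x = kapp (K n) f x - kapp (K n) g x"
  unfolding kapp_def by (rule Bochner_Integration.integral_diff) (auto intro: integrable_K)

lemma kapp_cmult: "kapp (K n) (\<lambda>y. c * f y) x = c * kapp (K n) f x"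
  unfolding kapp_def by simp

lemma nu_pos: assumes n: "n \<ge> 1" and h: "bm M h" and pos: "\<And>x. x \<in> space M \<Longrightarrow> h x > 0"
  shows "(\<integral>y. h y \<partial>\<nu> n) > 0"
  by (rule integral_pos[OF nu_fin[OF n] nu_sets[OF n] h pos nu_nz[OF n]])

lemma Sm_le_Sp: assumes n: "n \<ge> 1" and x: "x \<in> space M" shows "Sm n x \<le> Sp n x"
proof -
  have p: "(\<integral>y. (1::real) \<partial>\<nu> n) > 0" by (rule nu_pos[OF n bm_const[of M 1]]) simp
  have "Sm n x * (\<integral>y. (1::real) \<partial>\<nu> n) \<le> Sp n x * (\<integral>y. 1 \<partial>\<nu> n)"
    using kapp_bounds[OF n x bm_const, of 1] by simp
  then show ?thesis using p by simp
qed

lemma eps_props: assumes n: "n \<ge> 1" and x: "x \<in> space M"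
  shows "0 \<le> epsf M (Sm n) (Sp n)" "epsf M (Sm n) (Sp n) \<le> Sm n x / Sp n x" "epsf M (Sm n) (Sp n) \<le> 1"
proof -
  have bdd: "bdd_below ((\<lambda>x. Sm n x / Sp n x) ` space M)"
    by (rule bdd_belowI[of _ 0]) (use Sm_pos[OF n] Sp_pos[OF n] in \<open>auto intro: less_imp_le\<close>)
  show "epsf M (Sm n) (Sp n) \<le> Sm n x / Sp n x" unfolding epsf_def by (rule cINF_lower[OF bdd x])
  show "0 \<le> epsf M (Sm n) (Sp n)" unfolding epsf_def
    by (rule cINF_greatest) (use x Sm_pos[OF n] Sp_pos[OF n] in \<open>auto intro: less_imp_le\<close>)
  have "Sm n x / Sp n x \<le> 1" using Sm_le_Sp[OF n x] Sp_pos[OF n x] by simp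
  then show "epsf M (Sm n) (Sp n) \<le> 1" using \<open>epsf M (Sm n) (Sp n) \<le> Sm n x / Sp n x\<close> by linarith
qed

lemma ratio_lower:
  assumes n: "n \<ge> 1" and x: "x \<in> space M" and q: "bm M q" and qnn: "\<And>y. y \<in> space M \<Longrightarrow> q y \<ge> 0"
    and h: "bm M h" and hpos: "\<And>y. y \<in> space M \<Longrightarrow> h y > 0"
  shows "epsf M (Sm n) (Sp n) * ((\<integral>y. q y \<partial>\<nu> n) / (\<integral>y. h y \<partial>\<nu> n)) \<le> kapp (K n) q x / kapp (K n) h x"
proof -
  define Q where "Q = (\<integral>y. q y \<partial>\<nu> n)"
  define H where "H = (\<integral>y. h y \<partial>\<nu> n)"
  have H: "H > 0" unfolding H_def by (rule nu_pos[OF n h hpos])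
  have Q: "Q \<ge> 0" unfolding Q_def by (rule integral_nonneg_AE) (use qnn space_nu[OF n] in auto)
  have a: "Sm n x * Q \<le> kapp (K n) q x" unfolding Q_def by (rule kapp_bounds(1)[OF n x q qnn])
  have b1: "kapp (K n) h x \<le> Sp n x * H" unfolding H_def
    by (rule kapp_bounds(2)[OF n x h]) (use hpos in \<open>auto intro: less_imp_le\<close>)
  have b2: "Sm n x * H \<le> kapp (K n) h x" unfolding H_def
    by (rule kapp_bounds(1)[OF n x h]) (use hpos in \<open>auto intro: less_imp_le\<close>)
  have sm: "Sm n x > 0" "Sp n x > 0" using Sm_pos Sp_pos n x by auto
  have bpos: "kapp (K n) h x > 0" using b2 sm H by (smt (verit) mult_pos_pos)
  have e: "epsf M (Sm n) (Sp n) \<le> Sm n x / Sp n x" "0 \<le> epsf M (Sm n) (Sp n)" using eps_props[OF n x] by auto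
  have "epsf M (Sm n) (Sp n) * (Q / H) \<le> (Sm n x / Sp n x) * (Q / H)"
    by (rule mult_right_mono) (use e Q H in auto)
  also have "\<dots> = (Sm n x * Q) / (Sp n x * H)" by simp
  also have "\<dots> \<le> kapp (K n) q x / kapp (K n) h x"
  proof -
    have "0 \<le> Sm n x * Q" using sm Q by simp
    then have aq: "0 \<le> kapp (K n) q x" using a by linarith
    show ?thesis by (rule frac_le) (use a b1 bpos sm Q aq in auto)
  qed
  finally show ?thesis unfolding Q_def H_def .
qed

lemma kapp_pos: assumes n: "n \<ge> 1" and x: "x \<in> space M" and h: "bm M h" and hpos: "\<And>y. y \<in> space M \<Longrightarrow> h y > 0"
  shows "kapp (K n) h x > 0"
proof -
  have "Sm n x * (\<integral>y. h y \<partial>\<nu> n) \<le> kapp (K n) h x"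
    by (rule kapp_bounds(1)[OF n x h]) (use hpos in \<open>auto intro: less_imp_le\<close>)
  moreover have "Sm n x * (\<integral>y. h y \<partial>\<nu> n) > 0" using nu_pos[OF n h hpos] Sm_pos[OF n x] by simp
  ultimately show ?thesis by linarith
qed

lemma contract:
  assumes g: "bm M g" and h: "bm M h" and hpos: "\<And>y. y \<in> space M \<Longrightarrow> h y > 0"
    and osc: "\<And>u v. u \<in> space M \<Longrightarrow> v \<in> space M \<Longrightarrow> g u / h u - g v / h v \<le> D"
    and x: "x \<in> space M" and y: "y \<in> space M"
  shows "kapp (K 1) g x / kapp (K 1) h x - kapp (K 1) g y / kapp (K 1) h y \<le> (1 - epsf M (Sm 1) (Sp 1)) * D"
proof -
  define r where "r u = g u / h u" for u
  define m where "m = (INF u\<in>space M. r u)"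
  have bdd: "bdd_below (r ` space M)"
    by (rule bdd_belowI[of _ "r x - D"]) (auto simp: r_def dest: osc[OF x])
  have m1: "\<And>u. u \<in> space M \<Longrightarrow> m \<le> r u" unfolding m_def by (rule cINF_lower[OF bdd])
  have m2: "\<And>u. u \<in> space M \<Longrightarrow> r u \<le> m + D"
  proof -
    fix u assume u: "u \<in> space M"
    have "r u - D \<le> m" unfolding m_def
      by (rule cINF_greatest) (use x in \<open>auto simp: r_def dest: osc[OF u]\<close>)
    then show "r u \<le> m + D" by simp
  qed
  have D: "D \<ge> 0" using m1[OF x] m2[OF x] by simp
  define f where "f u = r u - m" for u
  have gm[measurable]: "g \<in> borel_measurable M" and hm[measurable]: "h \<in> borel_measurable M"
    using g h by (auto simp: bm_def)
  have fbm: "bm M f" unfolding bm_def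
  proof
    show "f \<in> borel_measurable M" unfolding f_def r_def by measurable
    show "\<exists>B. \<forall>x\<in>space M. \<bar>f x\<bar> \<le> B"
    proof (intro exI[of _ D] ballI)
      fix u assume u: "u \<in> space M"
      show "\<bar>f u\<bar> \<le> D" using m1[OF u] m2[OF u] unfolding f_def by arith
    qed
  qed
  define q1 where "q1 u = h u * f u" for u
  define q2 where "q2 u = h u * (D - f u)" for u
  have q1: "bm M q1" unfolding q1_def by (rule bm_mult[OF h fbm])
  have q2: "bm M q2" unfolding q2_def by (rule bm_mult[OF h bm_diff[OF bm_const fbm]])
  have q1nn: "\<And>u. u \<in> space M \<Longrightarrow> q1 u \<ge> 0" unfolding q1_def f_def
    using m1 hpos by (metis diff_ge_0_iff_ge less_imp_le mult_nonneg_nonneg)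
  have q2nn: "\<And>u. u \<in> space M \<Longrightarrow> q2 u \<ge> 0" unfolding q2_def f_def
    using m2 hpos by (smt (verit) mult_nonneg_nonneg)
  have q1eq: "\<And>u. u \<in> space M \<Longrightarrow> q1 u = g u - m * h u"
    unfolding q1_def f_def r_def using hpos by (force simp: field_simps)
  have q2eq: "\<And>u. u \<in> space M \<Longrightarrow> q2 u = D * h u - q1 u"
    unfolding q1_def q2_def by (simp add: algebra_simps)
  have one: "(1::nat) \<ge> 1" by simp
  have mh: "bm M (\<lambda>u. m * h u)" "bm M (\<lambda>u. D * h u)" using bm_mult[OF bm_const h] by auto
  have kq1: "\<And>z. z \<in> space M \<Longrightarrow> kapp (K 1) q1 z = kapp (K 1) g z - m * kapp (K 1) h z"
  proof -
    fix z assume z: "z \<in> space M"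
    have "kapp (K 1) q1 z = kapp (K 1) (\<lambda>u. g u - m * h u) z" by (rule kapp_cong[OF one z q1eq])
    also have "\<dots> = kapp (K 1) g z - m * kapp (K 1) h z"
      unfolding kapp_diff[OF one z g mh(1)] kapp_cmult ..
    finally show "kapp (K 1) q1 z = kapp (K 1) g z - m * kapp (K 1) h z" .
  qed
  have kq2: "\<And>z. z \<in> space M \<Longrightarrow> kapp (K 1) q2 z = D * kapp (K 1) h z - kapp (K 1) q1 z"
  proof -
    fix z assume z: "z \<in> space M"
    have "kapp (K 1) q2 z = kapp (K 1) (\<lambda>u. D * h u - q1 u) z" by (rule kapp_cong[OF one z q2eq])
    also have "\<dots> = D * kapp (K 1) h z - kapp (K 1) q1 z"
      unfolding kapp_diff[OF one z mh(2) q1] kapp_cmult ..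
    finally show "kapp (K 1) q2 z = D * kapp (K 1) h z - kapp (K 1) q1 z" .
  qed
  define H where "H = (\<integral>u. h u \<partial>\<nu> 1)"
  define Q1 where "Q1 = (\<integral>u. q1 u \<partial>\<nu> 1)"
  define Q2 where "Q2 = (\<integral>u. q2 u \<partial>\<nu> 1)"
  have H: "H > 0" unfolding H_def by (rule nu_pos[OF one h hpos])
  have "Q2 = (\<integral>u. D * h u - q1 u \<partial>\<nu> 1)" unfolding Q2_def
    by (rule Bochner_Integration.integral_cong) (auto simp: space_nu q2eq)
  also have "\<dots> = D * H - Q1" unfolding H_def Q1_def
    using integrable_nu[OF one h] integrable_nu[OF one q1] integrable_nu[OF one mh(2)]
    by (subst Bochner_Integration.integral_diff) auto
  finally have Q2: "Q2 = D * H - Q1" .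
  define \<epsilon> where "\<epsilon> = epsf M (Sm 1) (Sp 1)"
  have bx: "kapp (K 1) h x > 0" by (rule kapp_pos[OF one x h hpos])
  have by': "kapp (K 1) h y > 0" by (rule kapp_pos[OF one y h hpos])
  have lx: "\<epsilon> * (Q2 / H) \<le> kapp (K 1) q2 x / kapp (K 1) h x"
    unfolding \<epsilon>_def Q2_def H_def by (rule ratio_lower[OF one x q2 q2nn h hpos])
  have ly: "\<epsilon> * (Q1 / H) \<le> kapp (K 1) q1 y / kapp (K 1) h y"
    unfolding \<epsilon>_def Q1_def H_def by (rule ratio_lower[OF one y q1 q1nn h hpos])
  have ex: "kapp (K 1) g x / kapp (K 1) h x = m + D - kapp (K 1) q2 x / kapp (K 1) h x"
    unfolding kq2[OF x] kq1[OF x] using bx by (simp add: field_simps)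
  have ey: "kapp (K 1) g y / kapp (K 1) h y = m + kapp (K 1) q1 y / kapp (K 1) h y"
    unfolding kq1[OF y] using by' by (simp add: field_simps)
  have "\<epsilon> * (Q2 / H) + \<epsilon> * (Q1 / H) = \<epsilon> * D" using H by (simp add: Q2 field_simps)
  then show ?thesis unfolding ex ey \<epsilon>_def[symmetric] using lx ly by (simp add: algebra_simps)
qed

end

lemma kcomp_bm: "setting M K \<nu> Sm Sp \<Longrightarrow> bm M \<phi> \<Longrightarrow> bm M (kcomp K n \<phi>)"
proof (induction n arbitrary: K \<nu> Sm Sp)
  case 0 then show ?case by simp
next
  case (Suc n)
  have "bm M (kcomp (\<lambda>m. K (Suc m)) n \<phi>)" by (rule Suc.IH[OF setting_shift[OF Suc.prems(1)] Suc.prems(2)])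
  then have "bm M (kapp (K 1) (kcomp (\<lambda>m. K (Suc m)) n \<phi>))" by (rule setting.kapp_bm[OF Suc.prems(1), rotated]) simp
  then show ?case by (simp only: kcomp_shift)
qed

lemma kcomp_pos: "setting M K \<nu> Sm Sp \<Longrightarrow> x \<in> space M \<Longrightarrow> kcomp K n (\<lambda>_. 1) x > 0"
proof (induction n arbitrary: K \<nu> Sm Sp x)
  case 0 then show ?case by simp
next
  case (Suc n)
  have s': "setting M (\<lambda>m. K (Suc m)) (\<lambda>m. \<nu> (Suc m)) (\<lambda>m. Sm (Suc m)) (\<lambda>m. Sp (Suc m))"
    by (rule setting_shift[OF Suc.prems(1)])
  show ?case unfolding kcomp_shift
    by (rule setting.kapp_pos[OF Suc.prems(1) _ Suc.prems(2) kcomp_bm[OF s' bm_const]])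
       (auto intro: Suc.IH[OF s'])
qed

lemma kcomp_ratio1:
  assumes s: "setting M K \<nu> Sm Sp" and x: "x \<in> space M" and x': "x' \<in> space M"
  shows "kcomp K (Suc n) (\<lambda>_. 1) x / kcomp K (Suc n) (\<lambda>_. 1) x' \<le> Sp 1 x / Sm 1 x'"
proof -
  interpret setting M K \<nu> Sm Sp by fact
  have s': "setting M (\<lambda>m. K (Suc m)) (\<lambda>m. \<nu> (Suc m)) (\<lambda>m. Sm (Suc m)) (\<lambda>m. Sp (Suc m))"
    by (rule setting_shift[OF s])
  define h where "h = kcomp (\<lambda>m. K (Suc m)) n (\<lambda>_. 1)"
  have h: "bm M h" unfolding h_def by (rule kcomp_bm[OF s' bm_const])
  have hpos: "\<And>y. y \<in> space M \<Longrightarrow> h y > 0" unfolding h_def by (rule kcomp_pos[OF s'])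
  have one: "(1::nat) \<ge> 1" by simp
  define H where "H = (\<integral>u. h u \<partial>\<nu> 1)"
  have H: "H > 0" unfolding H_def by (rule nu_pos[OF one h hpos])
  have a: "kapp (K 1) h x \<le> Sp 1 x * H" unfolding H_def
    by (rule kapp_bounds(2)[OF one x h]) (use hpos in \<open>auto intro: less_imp_le\<close>)
  have b: "Sm 1 x' * H \<le> kapp (K 1) h x'" unfolding H_def
    by (rule kapp_bounds(1)[OF one x' h]) (use hpos in \<open>auto intro: less_imp_le\<close>)
  have sm: "Sm 1 x' > 0" "Sp 1 x > 0" using Sm_pos Sp_pos x x' by auto
  have "kapp (K 1) h x / kapp (K 1) h x' \<le> (Sp 1 x * H) / (Sm 1 x' * H)"
    by (rule frac_le) (use a b sm H kapp_pos[OF one x h hpos] in auto)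
  also have "\<dots> = Sp 1 x / Sm 1 x'" using H by simp
  finally show ?thesis unfolding kcomp_shift h_def .
qed

lemma kcomp_osc:
  assumes "setting M K \<nu> Sm Sp" "bm M \<phi>" "\<And>x. x \<in> space M \<Longrightarrow> \<bar>\<phi> x\<bar> \<le> B"
    "x \<in> space M" "y \<in> space M"
  shows "kcomp K n \<phi> x / kcomp K n (\<lambda>_. 1) x - kcomp K n \<phi> y / kcomp K n (\<lambda>_. 1) y
     \<le> 2 * B * (\<Prod>p<n. 1 - (epsf M (Sm (Suc p)) (Sp (Suc p)))\<^sup>2)"
  using assms
proof (induction n arbitrary: K \<nu> Sm Sp x y)
  case 0 then show ?case using 0(3)[of x] 0(3)[of y] 0(4,5) by (simp, arith)
next
  case (Suc n)
  interpret setting M K \<nu> Sm Sp by fact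
  have s': "setting M (\<lambda>m. K (Suc m)) (\<lambda>m. \<nu> (Suc m)) (\<lambda>m. Sm (Suc m)) (\<lambda>m. Sp (Suc m))"
    by (rule setting_shift[OF Suc.prems(1)])
  define h where "h = kcomp (\<lambda>m. K (Suc m)) n (\<lambda>_. 1)"
  define g where "g = kcomp (\<lambda>m. K (Suc m)) n \<phi>"
  have h: "bm M h" unfolding h_def by (rule kcomp_bm[OF s' bm_const])
  have g: "bm M g" unfolding g_def by (rule kcomp_bm[OF s' Suc.prems(2)])
  have hpos: "\<And>y. y \<in> space M \<Longrightarrow> h y > 0" unfolding h_def by (rule kcomp_pos[OF s'])
  define D where "D = 2 * B * (\<Prod>p<n. 1 - (epsf M (Sm (Suc (Suc p))) (Sp (Suc (Suc p))))\<^sup>2)"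
  have osc: "\<And>u v. u \<in> space M \<Longrightarrow> v \<in> space M \<Longrightarrow> g u / h u - g v / h v \<le> D"
    unfolding g_def h_def D_def by (rule Suc.IH[OF s' Suc.prems(2,3)])
  have D: "D \<ge> 0" using osc[OF Suc.prems(4) Suc.prems(4)] by simp
  have c: "kapp (K 1) g x / kapp (K 1) h x - kapp (K 1) g y / kapp (K 1) h y \<le> (1 - epsf M (Sm 1) (Sp 1)) * D"
    by (rule contract[OF g h hpos osc Suc.prems(4,5)])
  have e: "0 \<le> epsf M (Sm 1) (Sp 1)" "epsf M (Sm 1) (Sp 1) \<le> 1" using eps_props[OF _ Suc.prems(4), of 1] by auto
  have "(1 - epsf M (Sm 1) (Sp 1)) * D \<le> (1 - (epsf M (Sm 1) (Sp 1))\<^sup>2) * D"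
    by (rule mult_right_mono) (use e D in \<open>auto simp: power2_eq_square intro: mult_left_le_one_le\<close>)
  also have "\<dots> = 2 * B * (\<Prod>p<Suc n. 1 - (epsf M (Sm (Suc p)) (Sp (Suc p)))\<^sup>2)"
    unfolding D_def prod.lessThan_Suc_shift by simp
  finally show ?case using c unfolding kcomp_shift g_def h_def by simp
qed


lemma prod_shift: "(\<Prod>p=1..n. f p) = (\<Prod>p<n. f (Suc p :: nat)) "
  by (induction n) (simp_all add: mult.commute)

theorem proposition3:
  fixes M :: "'a measure"
    and K :: "nat \<Rightarrow> 'a \<Rightarrow> 'a measure"
    and \<nu> :: "nat \<Rightarrow> 'a measure"
    and Sm Sp :: "nat \<Rightarrow> 'a \<Rightarrow> real"
  assumes K_sets: "\<And>n x. n \<ge> 1 \<Longrightarrow> x \<in> space M \<Longrightarrow> sets (K n x) = sets M"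
    and K_meas: "\<And>n A. n \<ge> 1 \<Longrightarrow> A \<in> sets M \<Longrightarrow> (\<lambda>x. emeasure (K n x) A) \<in> borel_measurable M"
    and nu_fin: "\<And>n. n \<ge> 1 \<Longrightarrow> finite_measure (\<nu> n)"
    and nu_sets: "\<And>n. n \<ge> 1 \<Longrightarrow> sets (\<nu> n) = sets M"
    and nu_nz: "\<And>n. n \<ge> 1 \<Longrightarrow> emeasure (\<nu> n) (space M) \<noteq> 0"
    and Sm_meas: "\<And>n. n \<ge> 1 \<Longrightarrow> Sm n \<in> borel_measurable M"
    and Sp_meas: "\<And>n. n \<ge> 1 \<Longrightarrow> Sp n \<in> borel_measurable M"
    and Sm_pos: "\<And>n x. n \<ge> 1 \<Longrightarrow> x \<in> space M \<Longrightarrow> Sm n x > 0"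
    and Sp_pos: "\<And>n x. n \<ge> 1 \<Longrightarrow> x \<in> space M \<Longrightarrow> Sp n x > 0"
    and Sm_bdd: "\<And>n. n \<ge> 1 \<Longrightarrow> \<exists>B. \<forall>x\<in>space M. Sm n x \<le> B"
    and Sp_bdd: "\<And>n. n \<ge> 1 \<Longrightarrow> \<exists>B. \<forall>x\<in>space M. Sp n x \<le> B"
    and lower: "\<And>n x A. n \<ge> 1 \<Longrightarrow> x \<in> space M \<Longrightarrow> A \<in> sets M \<Longrightarrow>
                  ennreal (Sm n x) * emeasure (\<nu> n) A \<le> emeasure (K n x) A"
    and upper: "\<And>n x A. n \<ge> 1 \<Longrightarrow> x \<in> space M \<Longrightarrow> A \<in> sets M \<Longrightarrow>
                  emeasure (K n x) A \<le> ennreal (Sp n x) * emeasure (\<nu> n) A"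
  defines "C_S \<equiv> (SUP n\<in>{1..}. SUP x\<in>space M. SUP x'\<in>space M. ereal (Sp n x / Sm n x'))"
    and "\<rho> \<equiv> (\<lambda>n. 1 - (INF x\<in>space M. Sm n x / Sp n x)\<^sup>2)"
  shows "(SUP n\<in>{1..}. SUP x\<in>space M. SUP x'\<in>space M.
            ereal (kcomp K n (\<lambda>_. 1) x / kcomp K n (\<lambda>_. 1) x')) \<le> C_S
         \<and> (\<forall>\<eta> \<phi> n. prob_space \<eta> \<longrightarrow> sets \<eta> = sets M \<longrightarrow> \<phi> \<in> borel_measurable M \<longrightarrow>
           (\<exists>B. \<forall>x\<in>space M. \<bar>\<phi> x\<bar> \<le> B) \<longrightarrow> n \<ge> 1 \<longrightarrow>
           (let Z = (\<integral>y. kcomp K n (\<lambda>_. 1) y \<partial>\<eta>);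
                E = (\<integral>y. kcomp K n \<phi> y \<partial>\<eta>)
            in (SUP x\<in>space M. ereal \<bar>kcomp K n \<phi> x / Z - (kcomp K n (\<lambda>_. 1) x / Z) * (E / Z)\<bar>))
           \<le> ereal (2 * supnorm M \<phi>) * C_S * ereal (\<Prod>p=1..n. \<rho> p))"
proof -
  interpret s: setting M K \<nu> Sm Sp
    by (rule setting.intro) (fact K_sets K_meas nu_fin nu_sets nu_nz Sm_meas Sp_meas Sm_pos Sp_pos
         Sm_bdd Sp_bdd lower upper)+
  have set: "setting M K \<nu> Sm Sp" by (rule s.setting_axioms)
  have R: "ereal (kcomp K n (\<lambda>_. 1) x / kcomp K n (\<lambda>_. 1) x') \<le> C_S"
    if n: "n \<ge> 1" and x: "x \<in> space M" and x': "x' \<in> space M" for n x x'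
  proof -
    obtain m where m: "n = Suc m" using n by (cases n) auto
    have "kcomp K n (\<lambda>_. 1) x / kcomp K n (\<lambda>_. 1) x' \<le> Sp 1 x / Sm 1 x'"
      unfolding m by (rule kcomp_ratio1[OF set x x'])
    also have "ereal (Sp 1 x / Sm 1 x') \<le> C_S" unfolding C_S_def
      apply (rule SUP_upper2[where i=1], simp)
      apply (rule SUP_upper2[where i=x], rule x)
      apply (rule SUP_upper2[where i=x'], rule x')
      by simp
    finally show ?thesis by simp
  qed
  have part1: "(SUP n\<in>{1..}. SUP x\<in>space M. SUP x'\<in>space M.
            ereal (kcomp K n (\<lambda>_. 1) x / kcomp K n (\<lambda>_. 1) x')) \<le> C_S"
    by (intro SUP_least) (auto intro: R)
  have part2: "(let Z = (\<integral>y. kcomp K n (\<lambda>_. 1) y \<partial>\<eta>);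
                E = (\<integral>y. kcomp K n \<phi> y \<partial>\<eta>)
            in (SUP x\<in>space M. ereal \<bar>kcomp K n \<phi> x / Z - (kcomp K n (\<lambda>_. 1) x / Z) * (E / Z)\<bar>))
           \<le> ereal (2 * supnorm M \<phi>) * C_S * ereal (\<Prod>p=1..n. \<rho> p)"
    if eta: "prob_space \<eta>" and eta_sets: "sets \<eta> = sets M" and phim: "\<phi> \<in> borel_measurable M"
      and phib: "\<exists>B. \<forall>x\<in>space M. \<bar>\<phi> x\<bar> \<le> B" and n: "n \<ge> 1" for \<eta> \<phi> n
  proof (cases "space M = {}")
    case True then show ?thesis by (simp add: Let_def)
  next
    case False
    then obtain x0 where x0: "x0 \<in> space M" by blast
    define k1 where "k1 = kcomp K n (\<lambda>_. 1)"
    define kp where "kp = kcomp K n \<phi>"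
    define Z where "Z = (\<integral>y. k1 y \<partial>\<eta>)"
    define E where "E = (\<integral>y. kp y \<partial>\<eta>)"
    define B where "B = supnorm M \<phi>"
    define P where "P = (\<Prod>p=1..n. \<rho> p)"
    define D where "D = 2 * B * P"
    have phibm: "bm M \<phi>" using phim phib by (simp add: bm_def)
    have Bb: "\<bar>\<phi> x\<bar> \<le> B" if x: "x \<in> space M" for x
    proof -
      obtain C where C: "\<forall>x\<in>space M. \<bar>\<phi> x\<bar> \<le> C" using phib by blast
      have "bdd_above ((\<lambda>x. \<bar>\<phi> x\<bar>) ` space M)" using C by (auto intro: bdd_aboveI)
      then show ?thesis unfolding B_def supnorm_def by (rule cSUP_upper[OF x])
    qed
    have k1bm: "bm M k1" unfolding k1_def by (rule kcomp_bm[OF set bm_const])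
    have kpbm: "bm M kp" unfolding kp_def by (rule kcomp_bm[OF set phibm])
    have k1pos: "\<And>y. y \<in> space M \<Longrightarrow> k1 y > 0" unfolding k1_def by (rule kcomp_pos[OF set])
    have prodeq: "(\<Prod>p<n. 1 - (epsf M (Sm (Suc p)) (Sp (Suc p)))\<^sup>2) = P"
      unfolding P_def \<rho>_def epsf_def by (rule prod_shift[symmetric])
    have osc: "kp u / k1 u - kp v / k1 v \<le> D" if "u \<in> space M" "v \<in> space M" for u v
      using kcomp_osc[OF set phibm Bb that, of n] unfolding prodeq D_def k1_def kp_def .
    have D: "D \<ge> 0" using osc[OF x0 x0] by simp
    have fin: "finite_measure \<eta>" using eta by (rule prob_space.axioms(1))
    have sp: "space \<eta> = space M" using eta_sets sets_eq_imp_space_eq by blast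
    have int1: "integrable \<eta> k1" by (rule s.integrable_fin[OF fin eta_sets k1bm])
    have intp: "integrable \<eta> kp" by (rule s.integrable_fin[OF fin eta_sets kpbm])
    have em: "emeasure \<eta> (space M) \<noteq> 0" using prob_space.emeasure_space_1[OF eta] sp by simp
    have Z: "Z > 0" unfolding Z_def by (rule s.integral_pos[OF fin eta_sets k1bm k1pos em])
    have meas1: "measure \<eta> (space \<eta>) = 1" using prob_space.prob_space[OF eta] .
    have main: "\<bar>kp x / Z - (k1 x / Z) * (E / Z)\<bar> \<le> (k1 x / Z) * D" if x: "x \<in> space M" for x
    proof -
      define r where "r u = kp u / k1 u" for u
      have "r x * Z - E = (\<integral>y. r x * k1 y - kp y \<partial>\<eta>)"
        unfolding Z_def E_def using int1 intp by simp
      also have "\<dots> = (\<integral>y. k1 y * (r x - r y) \<partial>\<eta>)"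
      proof (rule Bochner_Integration.integral_cong)
        fix y assume "y \<in> space \<eta>"
        then have "k1 y > 0" "k1 x > 0" using k1pos sp x by auto
        then show "r x * k1 y - kp y = k1 y * (r x - r y)" by (simp add: r_def field_simps)
      qed simp
      finally have e1: "r x * Z - E = (\<integral>y. k1 y * (r x - r y) \<partial>\<eta>)" .
      have ib: "bm M (\<lambda>y. k1 y * (r x - r y))" unfolding r_def
      proof (rule bm_mult[OF k1bm], simp add: bm_def, intro conjI)
        show "(\<lambda>y. kp x / k1 x - kp y / k1 y) \<in> borel_measurable M"
          using k1bm kpbm by (auto simp: bm_def)
        show "\<exists>B. \<forall>y\<in>space M. \<bar>kp x / k1 x - kp y / k1 y\<bar> \<le> B"
        proof (intro exI[of _ D] ballI)
          fix y assume y: "y \<in> space M"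
          show "\<bar>kp x / k1 x - kp y / k1 y\<bar> \<le> D" using osc[OF x y] osc[OF y x] by arith
        qed
      qed
      have "\<bar>r x * Z - E\<bar> \<le> (\<integral>y. \<bar>k1 y * (r x - r y)\<bar> \<partial>\<eta>)" unfolding e1 by (rule integral_abs_bound)
      also have "\<dots> \<le> (\<integral>y. D * k1 y \<partial>\<eta>)"
      proof (rule integral_mono)
        show "integrable \<eta> (\<lambda>y. \<bar>k1 y * (r x - r y)\<bar>)"
          using s.integrable_fin[OF fin eta_sets ib] by (rule integrable_abs)
        show "integrable \<eta> (\<lambda>y. D * k1 y)" using int1 by simp
        fix y assume "y \<in> space \<eta>"
        then have y: "y \<in> space M" using sp by simp
        have "\<bar>r x - r y\<bar> \<le> D" using osc[OF x y] osc[OF y x] unfolding r_def by arith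
        then show "\<bar>k1 y * (r x - r y)\<bar> \<le> D * k1 y"
          using k1pos[OF y] by (simp add: abs_mult mult.commute mult_left_mono)
      qed
      also have "\<dots> = D * Z" unfolding Z_def by simp
      finally have b: "\<bar>r x * Z - E\<bar> \<le> D * Z" .
      have eq: "kp x / Z - (k1 x / Z) * (E / Z) = (k1 x / Z) * ((r x * Z - E) / Z)"
        unfolding r_def using k1pos[OF x] Z by (simp add: field_simps)
      have c: "\<bar>(r x * Z - E) / Z\<bar> \<le> D" using b Z by (simp add: divide_le_eq abs_divide mult.commute)
      have a: "\<bar>k1 x / Z\<bar> = k1 x / Z" using k1pos[OF x] Z by simp
      show ?thesis unfolding eq abs_mult a
        by (rule mult_left_mono[OF c]) (use k1pos[OF x] Z in simp)
    qed
    have CS: "ereal (k1 x / Z) \<le> C_S" if x: "x \<in> space M" for x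
    proof (cases C_S)
      case (real c)
      have le: "k1 x \<le> c * k1 y" if y: "y \<in> space M" for y
      proof -
        have "ereal (k1 x / k1 y) \<le> ereal c" using R[OF n x y] real unfolding k1_def by simp
        then have "k1 x / k1 y \<le> c" by simp
        then show ?thesis using k1pos[OF y] by (simp add: divide_le_eq)
      qed
      have "k1 x = (\<integral>y. k1 x \<partial>\<eta>)" using meas1 by simp
      also have "\<dots> \<le> (\<integral>y. c * k1 y \<partial>\<eta>)"
        by (rule integral_mono) (use int1 le sp finite_measure.integrable_const[OF fin] in auto)
      also have "\<dots> = c * Z" unfolding Z_def by simp
      finally have "k1 x / Z \<le> c" using Z by (simp add: divide_le_eq mult.commute)
      then show ?thesis using real by simp
    next
      case PInf then show ?thesis by simp
    next
      case MInf then show ?thesis using R[OF n x x] by simp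
    qed
    have "(SUP x\<in>space M. ereal \<bar>kp x / Z - (k1 x / Z) * (E / Z)\<bar>) \<le> C_S * ereal D"
    proof (rule SUP_least)
      fix x assume x: "x \<in> space M"
      have "ereal \<bar>kp x / Z - (k1 x / Z) * (E / Z)\<bar> \<le> ereal (k1 x / Z) * ereal D"
        using main[OF x] by simp
      also have "\<dots> \<le> C_S * ereal D" by (rule ereal_mult_right_mono[OF CS[OF x]]) (use D in simp)
      finally show "ereal \<bar>kp x / Z - (k1 x / Z) * (E / Z)\<bar> \<le> C_S * ereal D" .
    qed
    also have "C_S * ereal D = ereal (2 * supnorm M \<phi>) * C_S * ereal (\<Prod>p=1..n. \<rho> p)"
      unfolding D_def B_def P_def by (metis mult.assoc mult.commute times_ereal.simps(1))
    finally show ?thesis unfolding Let_def k1_def kp_def Z_def E_def .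
  qed
  show ?thesis using part1 part2 by blast
qed

end
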